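(* Let $X$ be a finite semi-permutation all of whose points have $x$-coordinates in $\{0,1,\dots,N-1\}$, let $0\le s<N$ be an integer, and let $X^s=\{((p.x+s)\bmod N,\;p.y): p\in X\}$ be the cyclic shift of $X$ by $s$ units to the right. Then $\mathrm{opt}(X^s)\ge \mathrm{opt}(X)-|X|$.
   Context: Points have integer coordinates. Two points $p,q$ are collinear if $p.x=q.x$ or $p.y=q.y$; otherwise $\square_{p,q}$ is the smallest closed axis-parallel rectangle containing both. A non-collinear pair $(p,q)$ is satisfied in $S$ if some $r\in S\setminus\{p,q\}$ lies in $\square_{p,q}$; $S$ is satisfied if all its non-collinear pairs are satisfied. $X$ is a semi-permutation if every horizontal line containing a point of $X$ contains exactly one. $\mathrm{opt}(X)$ is the minimum $|Y|$ over point sets $Y$ such that $X\cup Y$ is satisfied. *)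

theory Defs
  imports Main
begin

type_synonym point = "int \<times> int"

definition collinear :: "point \<Rightarrow> point \<Rightarrow> bool" where
  "collinear p q \<longleftrightarrow> fst p = fst q \<or> snd p = snd q"

definition rect :: "point \<Rightarrow> point \<Rightarrow> point set" where
  "rect p q = {r. min (fst p) (fst q) \<le> fst r \<and> fst r \<le> max (fst p) (fst q)
                \<and> min (snd p) (snd q) \<le> snd r \<and> snd r \<le> max (snd p) (snd q)}"

definition pair_satisfied :: "point set \<Rightarrow> point \<Rightarrow> point \<Rightarrow> bool" where
  "pair_satisfied S p q \<longleftrightarrow> (\<exists>r \<in> S - {p, q}. r \<in> rect p q)"

definition satisfied :: "point set \<Rightarrow> bool" where
  "satisfied S \<longleftrightarrow> (\<forall>p\<in>S. \<forall>q\<in>S. \<not> collinear p q \<longrightarrow> pair_satisfied S p q)"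

definition semi_permutation :: "point set \<Rightarrow> bool" where
  "semi_permutation X \<longleftrightarrow> (\<forall>p\<in>X. \<forall>q\<in>X. snd p = snd q \<longrightarrow> p = q)"

definition opt :: "point set \<Rightarrow> nat" where
  "opt X = (LEAST n. \<exists>Y. finite Y \<and> card Y = n \<and> satisfied (X \<union> Y))"

definition cyc_shift :: "int \<Rightarrow> int \<Rightarrow> point set \<Rightarrow> point set" where
  "cyc_shift N s X = (\<lambda>p. ((fst p + s) mod N, snd p)) ` X"

end

theory Submission
  imports Defs
begin

lemma rect_sym: "rect p q = rect q p" by (auto simp: rect_def)
lemma collinear_sym: "collinear p q = collinear q p" by (auto simp: collinear_def)
lemma pair_sat_sym: "pair_satisfied S p q = pair_satisfied S q p"
  by (auto simp: pair_satisfied_def rect_sym)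

lemma exists_completion:
  assumes "finite S" shows "\<exists>Y. finite Y \<and> satisfied (S \<union> Y)"
proof -
  let ?G = "fst ` S \<times> snd ` S"
  have fin: "finite ?G" using assms by auto
  have sub: "S \<subseteq> ?G" by force
  have "satisfied ?G"
    unfolding satisfied_def pair_satisfied_def collinear_def
  proof (intro ballI impI)
    fix p q assume p: "p \<in> ?G" and q: "q \<in> ?G" and nc: "\<not> (fst p = fst q \<or> snd p = snd q)"
    have "(fst p, snd q) \<in> ?G" using p q by (simp add: mem_Times_iff)
    moreover have "(fst p, snd q) \<in> rect p q" by (auto simp: rect_def)
    moreover have "(fst p, snd q) \<notin> {p,q}" using nc by (cases p, cases q) auto
    ultimately show "\<exists>r\<in>?G - {p,q}. r \<in> rect p q" by blast
  qed
  moreover have "S \<union> ?G = ?G" using sub by blast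
  ultimately show ?thesis using fin by metis
qed

lemma opt_witness: assumes "finite S"
  shows "\<exists>Y. finite Y \<and> card Y = opt S \<and> satisfied (S \<union> Y)"
proof -
  obtain Y where "finite Y" "satisfied (S \<union> Y)" using exists_completion[OF assms] by blast
  then have "\<exists>n Y. finite Y \<and> card Y = n \<and> satisfied (S \<union> Y)" by blast
  then show ?thesis unfolding opt_def by (rule LeastI_ex)
qed

lemma opt_le: "finite Y \<Longrightarrow> satisfied (S \<union> Y) \<Longrightarrow> opt S \<le> card Y"
  unfolding opt_def by (rule Least_le) blast

lemma sat_restrict:
  assumes "satisfied S" "\<forall>p\<in>H. \<forall>q\<in>H. rect p q \<subseteq> H"
  shows "satisfied (S \<inter> H)"
  using assms unfolding satisfied_def pair_satisfied_def by fastforce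

lemma mono_min_le: "mono f \<Longrightarrow> min a c \<le> x \<Longrightarrow> min (f a) (f c) \<le> f (x::int)"
  for f :: "int \<Rightarrow> int"
  by (cases "a \<le> c") (auto simp: mono_def min_def intro: order_trans)

lemma mono_max_le: "mono f \<Longrightarrow> x \<le> max a c \<Longrightarrow> f x \<le> max (f a) (f (c::int))"
  for f :: "int \<Rightarrow> int"
  by (cases "a \<le> c") (auto simp: mono_def max_def intro: order_trans)

lemma rect_sub: "r \<in> rect a b \<Longrightarrow> rect r b \<subseteq> rect a b"
  by (auto simp: rect_def)

lemma rect_back: "r \<in> rect a b \<Longrightarrow> a \<in> rect r b \<Longrightarrow> a = r"
  by (cases a, cases r) (auto simp: rect_def min_def max_def split: if_splits)

lemma rect_self: "a \<in> rect a b" by (auto simp: rect_def)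

lemma sat_mono_image:
  fixes f g :: "int \<Rightarrow> int"
  assumes fin: "finite S" and sat: "satisfied S" and mf: "mono f" and mg: "mono g"
  shows "satisfied ((\<lambda>p. (f (fst p), g (snd p))) ` S)"
proof -
  define \<phi> where "\<phi> = (\<lambda>p::point. (f (fst p), g (snd p)))"
  have rect_mono: "\<phi> r \<in> rect (\<phi> a) (\<phi> b)" if "r \<in> rect a b" for r a b
    using that mono_min_le[OF mf] mono_max_le[OF mf] mono_min_le[OF mg] mono_max_le[OF mg]
    unfolding rect_def \<phi>_def by auto
  have "satisfied (\<phi> ` S)"
    unfolding satisfied_def
  proof (intro ballI impI)
    fix p q assume p: "p \<in> \<phi> ` S" and q: "q \<in> \<phi> ` S" and nc: "\<not> collinear p q"
    define PQ where "PQ = {ab. fst ab \<in> S \<and> snd ab \<in> S \<and> \<phi> (fst ab) = p \<and> \<phi> (snd ab) = q}"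
    define \<mu> where "\<mu> = (\<lambda>ab::point\<times>point. card (S \<inter> rect (fst ab) (snd ab)))"
    obtain ab0 where "ab0 \<in> PQ" using p q unfolding PQ_def by force
    then obtain ab where ab: "ab \<in> PQ" and minab: "\<forall>c. c \<in> PQ \<longrightarrow> \<mu> ab \<le> \<mu> c"
      using ex_has_least_nat[of "\<lambda>x. x \<in> PQ" ab0 \<mu>] by blast
    obtain a b where abdef: "ab = (a,b)" by (cases ab)
    have a: "a \<in> S" "\<phi> a = p" and b: "b \<in> S" "\<phi> b = q" using ab abdef PQ_def by auto
    have "\<not> collinear a b" using nc a b unfolding collinear_def \<phi>_def by auto
    then obtain r where r: "r \<in> S" "r \<noteq> a" "r \<noteq> b" "r \<in> rect a b"
      using sat a b unfolding satisfied_def pair_satisfied_def by blast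
    have np: "\<phi> r \<noteq> p"
    proof
      assume e: "\<phi> r = p"
      have "(r,b) \<in> PQ" using e r b unfolding PQ_def by auto
      moreover have "S \<inter> rect r b \<subset> S \<inter> rect a b"
        using rect_sub[OF r(4)] rect_back[OF r(4)] r(2) a(1) rect_self[of a b] by blast
      then have "\<mu> (r,b) < \<mu> ab" unfolding \<mu>_def abdef using fin by (simp add: psubset_card_mono)
      ultimately show False using minab by fastforce
    qed
    have r': "r \<in> rect b a" using r(4) rect_sym by blast
    have nq: "\<phi> r \<noteq> q"
    proof
      assume e: "\<phi> r = q"
      have "(a,r) \<in> PQ" using e r a unfolding PQ_def by auto
      moreover have "S \<inter> rect r a \<subset> S \<inter> rect b a"
        using rect_sub[OF r'] rect_back[OF r'] r(3) b(1) rect_self[of b a] by blast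
      then have "\<mu> (a,r) < \<mu> ab" unfolding \<mu>_def abdef using fin
        by (simp add: psubset_card_mono rect_sym)
      ultimately show False using minab by fastforce
    qed
    show "pair_satisfied (\<phi> ` S) p q"
      unfolding pair_satisfied_def using np nq r rect_mono[OF r(4)] a b by blast
  qed
  thus ?thesis unfolding \<phi>_def .
qed

lemma main_le:
  fixes X :: "point set" and N s :: int
  assumes finX: "finite X" and ne: "X \<noteq> {}"
    and rng: "\<forall>p\<in>X. 0 \<le> fst p \<and> fst p < N"
    and s0: "0 < s" and sN: "s < N"
  shows "opt X \<le> opt (cyc_shift N s X) + card X"
proof -
  let ?Xs = "cyc_shift N s X"
  have finXs: "finite ?Xs" using finX unfolding cyc_shift_def by simp
  have cardXs: "card ?Xs \<le> card X" unfolding cyc_shift_def by (rule card_image_le[OF finX])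
  obtain Y where finY: "finite Y" and cY: "card Y = opt ?Xs" and satZ: "satisfied (?Xs \<union> Y)"
    using opt_witness[OF finXs] by blast
  define Z where "Z = ?Xs \<union> Y"
  have finZ: "finite Z" using finXs finY Z_def by simp
  define R where "R = snd ` X"
  have finR: "finite R" and neR: "R \<noteq> {}" using finX ne R_def by auto
  define g where "g = (\<lambda>y. if \<exists>r\<in>R. r \<le> y then Max {r\<in>R. r \<le> y} else Min R)"
  have gR: "g y \<in> R" for y
  proof (cases "\<exists>r\<in>R. r \<le> y")
    case True
    then have "Max {r\<in>R. r \<le> y} \<in> {r\<in>R. r \<le> y}" using finR by (intro Max_in) auto
    then show ?thesis using True g_def by simp
  next
    case False
    then show ?thesis using g_def finR neR by simp
  qed
  have gid: "g y = y" if "y \<in> R" for y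
  proof -
    have "Max {r\<in>R. r \<le> y} = y" using that finR by (intro Max_eqI) auto
    then show ?thesis using that g_def by auto
  qed
  have mg: "mono g"
  proof (rule monoI)
    fix y1 y2 :: int assume le: "y1 \<le> y2"
    show "g y1 \<le> g y2"
    proof (cases "\<exists>r\<in>R. r \<le> y1")
      case True
      then have T2: "\<exists>r\<in>R. r \<le> y2" using le by (meson order_trans)
      have "Max {r\<in>R. r \<le> y1} \<le> Max {r\<in>R. r \<le> y2}"
        using True le finR by (intro Max_mono) auto
      then show ?thesis using True T2 g_def by simp
    next
      case False
      then have "g y1 = Min R" using g_def by simp
      then show ?thesis using gR[of y2] finR by simp
    qed
  qed
  define fA where "fA = (\<lambda>x::int. min (max x 0) (s-1) + N - s)"
  define fB where "fB = (\<lambda>x::int. min (max x s) (N-1) - s)"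
  have mfA: "mono fA" unfolding fA_def by (rule monoI) auto
  have mfB: "mono fB" unfolding fB_def by (rule monoI) auto
  define ZA where "ZA = Z \<inter> {p. fst p < s}"
  define ZB where "ZB = Z \<inter> {p. s \<le> fst p}"
  have satA: "satisfied ZA" unfolding ZA_def using satZ Z_def
    by (intro sat_restrict) (auto simp: rect_def)
  have satB: "satisfied ZB" unfolding ZB_def using satZ Z_def
    by (intro sat_restrict) (auto simp: rect_def)
  define WA where "WA = (\<lambda>p. (fA (fst p), g (snd p))) ` ZA"
  define WB where "WB = (\<lambda>p. (fB (fst p), g (snd p))) ` ZB"
  define E where "E = (\<lambda>y. (N - s, y)) ` R"
  have sWA: "satisfied WA" unfolding WA_def
    by (rule sat_mono_image[OF _ satA mfA mg]) (simp add: ZA_def finZ)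
  have sWB: "satisfied WB" unfolding WB_def
    by (rule sat_mono_image[OF _ satB mfB mg]) (simp add: ZB_def finZ)
  have WAp: "N - s \<le> fst w \<and> snd w \<in> R" if "w \<in> WA" for w
    using that gR s0 unfolding WA_def fA_def by auto
  have WBp: "fst w < N - s \<and> snd w \<in> R" if "w \<in> WB" for w
    using that gR sN unfolding WB_def fB_def by auto
  have Ep: "fst w = N - s \<and> snd w \<in> R" if "w \<in> E" for w
    using that unfolding E_def by auto
  define W where "W = WA \<union> WB \<union> E"
  have inE: "(N - s, y) \<in> W" if "y \<in> R" for y using that unfolding W_def E_def by auto
  have sub_ps: "pair_satisfied W p q" if "pair_satisfied S p q" "S \<subseteq> W" for S p q
    using that unfolding pair_satisfied_def by blast
  have half: "pair_satisfied W p q"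
    if p: "p \<in> W" and q: "q \<in> W" and nc: "\<not> collinear p q" and le: "fst p \<le> fst q" for p q
  proof -
    have nc': "fst p \<noteq> fst q" "snd p \<noteq> snd q" using nc unfolding collinear_def by auto
    show ?thesis
    proof (cases "p \<in> WB")
      case True
      show ?thesis
      proof (cases "q \<in> WB")
        case True
        then show ?thesis using \<open>p \<in> WB\<close> sWB nc unfolding satisfied_def
          by (intro sub_ps[of WB]) (auto simp: W_def)
      next
        case False
        then have "N - s \<le> fst q" using q WAp Ep unfolding W_def by fastforce
        moreover have "fst p < N - s" "snd p \<in> R" using WBp True by auto
        ultimately show ?thesis unfolding pair_satisfied_def using inE[of "snd p"] nc'
          by (intro bexI[of _ "(N - s, snd p)"]) (auto simp: rect_def prod_eq_iff)
      qed
    next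
      case False
      then have pAE: "p \<in> WA \<or> p \<in> E" using p W_def by auto
      then have "N - s \<le> fst p" using WAp Ep by fastforce
      then have qAE: "q \<in> WA \<or> q \<in> E" using q le WBp unfolding W_def by fastforce
      show ?thesis
      proof (cases "p \<in> WA \<and> q \<in> WA")
        case True
        then show ?thesis using sWA nc unfolding satisfied_def
          by (intro sub_ps[of WA]) (auto simp: W_def)
      next
        case False
        then have "p \<in> E \<or> q \<in> E" using pAE qAE by auto
        moreover have "\<not> q \<in> E"
        proof
          assume "q \<in> E"
          then have "fst q = N - s" using Ep by auto
          then show False using \<open>N - s \<le> fst p\<close> le nc' by auto
        qed
        ultimately have pE: "p \<in> E" by auto
        then have "fst p = N - s" using Ep by auto
        moreover have "snd q \<in> R" using qAE WAp Ep by blast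
        ultimately show ?thesis unfolding pair_satisfied_def using inE[of "snd q"] nc' le
          by (intro bexI[of _ "(N - s, snd q)"]) (auto simp: rect_def prod_eq_iff)
      qed
    qed
  qed
  have satW: "satisfied W" unfolding satisfied_def
  proof (intro ballI impI)
    fix p q assume p: "p \<in> W" and q: "q \<in> W" and nc: "\<not> collinear p q"
    show "pair_satisfied W p q"
    proof (cases "fst p \<le> fst q")
      case True then show ?thesis using half p q nc by blast
    next
      case False
      then have "pair_satisfied W q p" using half p q nc collinear_sym by (metis linorder_linear)
      then show ?thesis using pair_sat_sym by blast
    qed
  qed
  have XW: "X \<subseteq> W"
  proof
    fix p assume pX: "p \<in> X"
    obtain x y where pxy: "p = (x, y)" by (cases p)
    have x: "0 \<le> x" "x < N" using rng pX pxy by auto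
    have yR: "y \<in> R" using pX pxy R_def by force
    show "p \<in> W"
    proof (cases "N - s \<le> x")
      case True
      have m: "(x + s) mod N = x + s - N"
      proof -
        have "(x + s) mod N = ((x + s - N) + N) mod N" by simp
        also have "\<dots> = (x + s - N) mod N" by (rule mod_add_self2)
        also have "\<dots> = x + s - N" using True x sN s0 by (intro mod_pos_pos_trivial) auto
        finally show ?thesis .
      qed
      have "(x + s - N, y) \<in> ?Xs" unfolding cyc_shift_def using pX pxy m by force
      then have "(x + s - N, y) \<in> ZA" unfolding ZA_def Z_def using x sN by auto
      moreover have "fA (x + s - N) = x" using True x sN s0 unfolding fA_def by auto
      ultimately have "(x, y) \<in> WA" unfolding WA_def using gid[OF yR] by force
      then show ?thesis using pxy W_def by auto
    next
      case False
      have m: "(x + s) mod N = x + s" using False x s0 by (intro mod_pos_pos_trivial) auto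
      have "(x + s, y) \<in> ?Xs" unfolding cyc_shift_def using pX pxy m by force
      then have "(x + s, y) \<in> ZB" unfolding ZB_def Z_def using x by auto
      moreover have "fB (x + s) = x" using False x sN s0 unfolding fB_def by auto
      ultimately have "(x, y) \<in> WB" unfolding WB_def using gid[OF yR] by force
      then show ?thesis using pxy W_def by auto
    qed
  qed
  have finW: "finite W" unfolding W_def WA_def WB_def E_def ZA_def ZB_def using finZ finR by auto
  have c1: "card WA \<le> card ZA" unfolding WA_def by (rule card_image_le) (simp add: ZA_def finZ)
  have c2: "card WB \<le> card ZB" unfolding WB_def by (rule card_image_le) (simp add: ZB_def finZ)
  have c3: "card E \<le> card X" unfolding E_def R_def
    by (metis card_image_le finX finite_imageI order_trans)
  have c4: "card ZA + card ZB = card Z"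
  proof -
    have "Z = ZA \<union> ZB" "ZA \<inter> ZB = {}" unfolding ZA_def ZB_def by auto
    then show ?thesis using finZ by (metis card_Un_disjoint finite_Un)
  qed
  have c5: "card Z \<le> card ?Xs + card Y" unfolding Z_def by (rule card_Un_le)
  have cW: "card W \<le> card WA + card WB + card E" unfolding W_def
    by (metis add_le_mono card_Un_le order_trans le_refl)
  have "X \<union> (W - X) = W" using XW by blast
  then have "opt X \<le> card (W - X)" using opt_le[of "W - X" X] finW satW by auto
  also have "card (W - X) = card W - card X" using XW finX by (simp add: card_Diff_subset)
  finally show ?thesis using c1 c2 c3 c4 c5 cW cardXs cY by linarith
qed

theorem claim4p4:
  fixes X :: "point set" and N s :: int
  assumes "finite X" and "semi_permutation X"
    and "\<forall>p\<in>X. 0 \<le> fst p \<and> fst p < N"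
    and "0 \<le> s" and "s < N"
  shows "int (opt (cyc_shift N s X)) \<ge> int (opt X) - int (card X)"
proof (cases "s = 0 \<or> X = {}")
  case True
  have "cyc_shift N s X = X"
  proof (cases "X = {}")
    case True then show ?thesis unfolding cyc_shift_def by simp
  next
    case False
    then have s: "s = 0" using \<open>s = 0 \<or> X = {}\<close> by simp
    have "(\<lambda>p. ((fst p + s) mod N, snd p)) ` X = id ` X"
      using assms(3) s by (intro image_cong) (auto simp: mod_pos_pos_trivial)
    then show ?thesis unfolding cyc_shift_def by simp
  qed
  then show ?thesis by simp
next
  case False
  then have "opt X \<le> opt (cyc_shift N s X) + card X"
    using main_le[OF assms(1) _ assms(3) _ assms(5)] assms(4) by auto
  then show ?thesis by linarith
qed

end
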